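(* Let $G=(V,E)$ be a simple connected graph with $n=|V|\ge 2$ vertices and diameter $d=\mathrm{diam}(G)$. Then the pebbling number of $G$ satisfies $$f(G) \leq \left(n + \left\lfloor \frac{n-1}{d} \right\rfloor - 1\right) 2^{d-1} - n + 2.$$
   Context: A distribution of pebbles on $G$ is a function $D: V \to \mathbb{N}=\{0,1,2,\dots\}$; its size is $|D|=\sum_{v\in V} D(v)$. A pebbling step removes two pebbles from some vertex and places one pebble on an adjacent vertex. For a root vertex $v$, $D$ is $v$-solvable if, after some finite sequence of pebbling steps starting from $D$, at least one pebble is on $v$; $D$ is solvable if it is $v$-solvable for every $v\in V$. The pebbling number $f(G)$ is the smallest integer $N$ such that every distribution of size $N$ on $G$ is solvable. *)

theory Defs
  imports Main
begin

definition simple_graph :: "'a set \<Rightarrow> ('a \<Rightarrow> 'a \<Rightarrow> bool) \<Rightarrow> bool" where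
  "simple_graph V E \<longleftrightarrow> finite V \<and> (\<forall>u v. E u v \<longrightarrow> u \<in> V \<and> v \<in> V)
     \<and> (\<forall>u v. E u v \<longrightarrow> E v u) \<and> (\<forall>v. \<not> E v v)"

definition walk :: "'a set \<Rightarrow> ('a \<Rightarrow> 'a \<Rightarrow> bool) \<Rightarrow> 'a \<Rightarrow> 'a \<Rightarrow> nat \<Rightarrow> bool" where
  "walk V E u v k \<longleftrightarrow> (\<exists>p :: nat \<Rightarrow> 'a. p 0 = u \<and> p k = v \<and> (\<forall>i\<le>k. p i \<in> V)
      \<and> (\<forall>i<k. E (p i) (p (Suc i))))"

definition connected_graph :: "'a set \<Rightarrow> ('a \<Rightarrow> 'a \<Rightarrow> bool) \<Rightarrow> bool" where
  "connected_graph V E \<longleftrightarrow> (\<forall>u\<in>V. \<forall>v\<in>V. \<exists>k. walk V E u v k)"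

definition dist :: "'a set \<Rightarrow> ('a \<Rightarrow> 'a \<Rightarrow> bool) \<Rightarrow> 'a \<Rightarrow> 'a \<Rightarrow> nat" where
  "dist V E u v = (LEAST k. walk V E u v k)"

definition diam :: "'a set \<Rightarrow> ('a \<Rightarrow> 'a \<Rightarrow> bool) \<Rightarrow> nat" where
  "diam V E = Max {dist V E u v | u v. u \<in> V \<and> v \<in> V}"

definition distribution :: "'a set \<Rightarrow> ('a \<Rightarrow> nat) \<Rightarrow> bool" where
  "distribution V D \<longleftrightarrow> (\<forall>v. v \<notin> V \<longrightarrow> D v = 0)"

definition pebbling_step :: "('a \<Rightarrow> 'a \<Rightarrow> bool) \<Rightarrow> ('a \<Rightarrow> nat) \<Rightarrow> ('a \<Rightarrow> nat) \<Rightarrow> bool" where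
  "pebbling_step E D D' \<longleftrightarrow> (\<exists>u v. E u v \<and> 2 \<le> D u \<and> D' = (D(u := D u - 2))(v := D v + 1))"

definition root_solvable :: "('a \<Rightarrow> 'a \<Rightarrow> bool) \<Rightarrow> ('a \<Rightarrow> nat) \<Rightarrow> 'a \<Rightarrow> bool" where
  "root_solvable E D r \<longleftrightarrow> (\<exists>D'. (pebbling_step E)\<^sup>*\<^sup>* D D' \<and> 1 \<le> D' r)"

definition solvable :: "'a set \<Rightarrow> ('a \<Rightarrow> 'a \<Rightarrow> bool) \<Rightarrow> ('a \<Rightarrow> nat) \<Rightarrow> bool" where
  "solvable V E D \<longleftrightarrow> (\<forall>r\<in>V. root_solvable E D r)"

definition pebbling_number :: "'a set \<Rightarrow> ('a \<Rightarrow> 'a \<Rightarrow> bool) \<Rightarrow> nat" where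
  "pebbling_number V E = (LEAST N. \<forall>D. distribution V D \<and> sum D V = N \<longrightarrow> solvable V E D)"

end

theory Submission
  imports Defs
begin

lemma walk0: "walk V E u w 0 \<Longrightarrow> u = w"
  by (auto simp: walk_def)

lemma walk_refl: "u \<in> V \<Longrightarrow> walk V E u u 0"
  unfolding walk_def by (rule exI[of _ "\<lambda>i. u"]) auto

lemma walk_Suc: "walk V E u w (Suc k) \<Longrightarrow> \<exists>u'. E u u' \<and> walk V E u' w k"
proof -
  assume "walk V E u w (Suc k)"
  then obtain p where p: "p 0 = u" "p (Suc k) = w" "\<forall>i\<le>Suc k. p i \<in> V"
    "\<forall>i<Suc k. E (p i) (p (Suc i))" by (auto simp: walk_def)
  have "E u (p 1)" using p by auto
  moreover have "walk V E (p 1) w k"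
    unfolding walk_def using p by (intro exI[of _ "\<lambda>i. p (Suc i)"]) auto
  ultimately show ?thesis by blast
qed

lemma walk_prefix: "p 0 = v \<Longrightarrow> \<forall>i\<le>d. p i \<in> V \<Longrightarrow> \<forall>i<d. E (p i) (p (Suc i))
  \<Longrightarrow> j \<le> d \<Longrightarrow> walk V E v (p j) j"
  unfolding walk_def by (intro exI[of _ p]) auto

lemma walk_suffix: "p d = r \<Longrightarrow> \<forall>i\<le>d. p i \<in> V \<Longrightarrow> \<forall>i<d. E (p i) (p (Suc i))
  \<Longrightarrow> j \<le> d \<Longrightarrow> walk V E (p j) r (d - j)"
  unfolding walk_def by (intro exI[of _ "\<lambda>i. p (i + j)"]) auto

lemma edge_move:
  assumes "E u u'" "u \<noteq> u'" "2 * m \<le> D u"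
  shows "(pebbling_step E)\<^sup>*\<^sup>* D ((D(u := D u - 2 * m))(u' := D u' + m))"
  using assms(3)
proof (induction m arbitrary: D)
  case 0
  then show ?case by simp
next
  case (Suc m)
  define D1 where "D1 = (D(u := D u - 2))(u' := D u' + 1)"
  have s: "pebbling_step E D D1"
    unfolding pebbling_step_def D1_def using assms Suc.prems by (intro exI[of _ u] exI[of _ u']) auto
  have "2 * m \<le> D1 u" using Suc.prems assms(2) by (auto simp: D1_def)
  from Suc.IH[of D1, OF this] have r: "(pebbling_step E)\<^sup>*\<^sup>* D1 ((D1(u := D1 u - 2 * m))(u' := D1 u' + m))" .
  have eq: "(D1(u := D1 u - 2 * m))(u' := D1 u' + m) = (D(u := D u - 2 * Suc m))(u' := D u' + Suc m)"
    using assms(2) by (auto simp: D1_def fun_eq_iff)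
  show ?case using s r eq by (metis converse_rtranclp_into_rtranclp)
qed

lemma move:
  assumes "simple_graph V E" "walk V E u w k" "2 ^ k * m \<le> D u"
  shows "\<exists>D'. (pebbling_step E)\<^sup>*\<^sup>* D D' \<and>
    (\<forall>x. D x + (if x = w then m else 0) \<le> D' x + (if x = u then 2 ^ k * m else 0))"
  using assms(2,3)
proof (induction k arbitrary: u D)
  case 0
  then have "u = w" by (simp add: walk0)
  then show ?case by (intro exI[of _ D]) auto
next
  case (Suc k)
  obtain u' where u': "E u u'" "walk V E u' w k" using walk_Suc[OF Suc.prems(1)] by blast
  have ne: "u \<noteq> u'" using u'(1) assms(1) by (auto simp: simple_graph_def)
  define D1 where "D1 = (D(u := D u - 2 * (2 ^ k * m)))(u' := D u' + 2 ^ k * m)"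
  have r1: "(pebbling_step E)\<^sup>*\<^sup>* D D1" unfolding D1_def
    by (rule edge_move[where E=E and u=u and u'=u', OF u'(1) ne]) (use Suc.prems(2) in simp)
  have "2 ^ k * m \<le> D1 u'" by (simp add: D1_def)
  from Suc.IH[of u' D1, OF u'(2) this] obtain D' where D': "(pebbling_step E)\<^sup>*\<^sup>* D1 D'"
    "\<forall>x. D1 x + (if x = w then m else 0) \<le> D' x + (if x = u' then 2 ^ k * m else 0)" by blast
  have h1: "D1 x + (if x = u then 2 ^ Suc k * m else 0) = D x + (if x = u' then 2 ^ k * m else 0)" for x
    using ne Suc.prems(2) by (auto simp: D1_def)
  show ?case
  proof (intro exI[of _ D'] conjI allI)
    show "(pebbling_step E)\<^sup>*\<^sup>* D D'" using r1 D'(1) by simp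
    fix x
    show "D x + (if x = w then m else 0) \<le> D' x + (if x = u then 2 ^ Suc k * m else 0)"
      using h1[of x] D'(2)[rule_format, of x] by linarith
  qed
qed

lemma reach_solve:
  assumes "simple_graph V E" "(pebbling_step E)\<^sup>*\<^sup>* D D'" "walk V E x r k" "2 ^ k \<le> D' x"
  shows "root_solvable E D r"
proof -
  obtain D'' where D'': "(pebbling_step E)\<^sup>*\<^sup>* D' D''"
    "\<forall>y. D' y + (if y = r then 1 else 0) \<le> D'' y + (if y = x then 2 ^ k * 1 else 0)"
    using move[OF assms(1,3), of 1 D'] assms(4) by auto
  show ?thesis
  proof (cases "x = r")
    case True
    then have "1 \<le> D' r" using assms(4) by (metis le_trans one_le_power one_le_numeral) 
    then show ?thesis using assms(2) unfolding root_solvable_def by blast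
  next
    case False
    then have "1 \<le> D'' r" using D''(2)[rule_format, of r] by simp
    then show ?thesis using assms(2) D''(1) unfolding root_solvable_def
      by (meson rtranclp_trans)
  qed
qed

lemma one_source:
  assumes "simple_graph V E" "\<not> root_solvable E D r" "walk V E v u a" "walk V E u r c"
    "a + c < d" "2 ^ (d - 1) \<le> D v" "u \<noteq> v"
  shows False
proof -
  have "2 ^ a * 2 ^ c \<le> (2::nat) ^ (d - 1)"
    unfolding power_add[symmetric] by (rule power_increasing) (use assms(5) in auto)
  then obtain D1 where D1: "(pebbling_step E)\<^sup>*\<^sup>* D D1"
    "\<forall>x. D x + (if x = u then 2 ^ c else 0) \<le> D1 x + (if x = v then 2 ^ a * 2 ^ c else 0)"
    using move[OF assms(1,3), of "2 ^ c" D] assms(6) by auto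
  have "2 ^ c \<le> D1 u" using D1(2)[rule_format, of u] assms(7) by simp
  then have "root_solvable E D r" using reach_solve[OF assms(1) D1(1) assms(4)] by simp
  then show False using assms(2) by simp
qed

lemma two_source:
  assumes "simple_graph V E" "\<not> root_solvable E D r" "walk V E v u a" "walk V E w u b"
    "walk V E u r c" "a + c \<le> d" "b + c \<le> d" "2 ^ (d - 1) \<le> D v" "2 ^ (d - 1) \<le> D w"
    "v \<noteq> w" "u \<noteq> v" "u \<noteq> w" "1 \<le> c"
  shows False
proof -
  have pa: "2 ^ a * 2 ^ (c - 1) \<le> (2::nat) ^ (d - 1)"
    unfolding power_add[symmetric] by (rule power_increasing) (use assms(6,13) in auto)
  have pb: "2 ^ b * 2 ^ (c - 1) \<le> (2::nat) ^ (d - 1)"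
    unfolding power_add[symmetric] by (rule power_increasing) (use assms(7,13) in auto)
  obtain D1 where D1: "(pebbling_step E)\<^sup>*\<^sup>* D D1"
    "\<forall>x. D x + (if x = u then 2 ^ (c - 1) else 0) \<le> D1 x + (if x = v then 2 ^ a * 2 ^ (c - 1) else 0)"
    using move[OF assms(1,3), of "2 ^ (c - 1)" D] assms(8) pa by auto
  have w1: "2 ^ (d - 1) \<le> D1 w" using D1(2)[rule_format, of w] assms(9,10) by simp
  have u1: "D u + 2 ^ (c - 1) \<le> D1 u" using D1(2)[rule_format, of u] assms(11) by simp
  obtain D2 where D2: "(pebbling_step E)\<^sup>*\<^sup>* D1 D2"
    "\<forall>x. D1 x + (if x = u then 2 ^ (c - 1) else 0) \<le> D2 x + (if x = w then 2 ^ b * 2 ^ (c - 1) else 0)"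
    using move[OF assms(1,4), of "2 ^ (c - 1)" D1] w1 pb by auto
  have u2: "D1 u + 2 ^ (c - 1) \<le> D2 u" using D2(2)[rule_format, of u] assms(12) by simp
  have "(2::nat) ^ c = 2 ^ (c - 1) + 2 ^ (c - 1)" using assms(13)
    by (metis mult_2 power_Suc Suc_diff_1 less_le_trans zero_less_one)
  then have "2 ^ c \<le> D2 u" using u1 u2 by linarith
  moreover have "(pebbling_step E)\<^sup>*\<^sup>* D D2" using D1(1) D2(1) by simp
  ultimately have "root_solvable E D r" using reach_solve[OF assms(1) _ assms(5)] by blast
  then show False using assms(2) by simp
qed

lemma dist_walk:
  assumes "connected_graph V E" "x \<in> V" "r \<in> V"
  shows "walk V E x r (dist V E x r)"
proof -
  obtain k where "walk V E x r k" using assms unfolding connected_graph_def by blast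
  then show ?thesis unfolding dist_def by (rule LeastI)
qed

lemma dist_le_diam:
  assumes "simple_graph V E" "x \<in> V" "r \<in> V"
  shows "dist V E x r \<le> diam V E"
proof -
  have "{dist V E u v | u v. u \<in> V \<and> v \<in> V} = (\<lambda>(u,v). dist V E u v) ` (V \<times> V)" by auto
  moreover have "finite V" using assms(1) by (simp add: simple_graph_def)
  ultimately have "finite {dist V E u v | u v. u \<in> V \<and> v \<in> V}" by simp
  then show ?thesis unfolding diam_def by (rule Max_ge) (use assms in blast)
qed

lemma sum_aux:
  assumes "finite A" "S \<subseteq> A"
  shows "(\<Sum>x\<in>A. (c::nat) + (if x \<in> S then t else 0)) = card A * c + card S * t"
proof -
  have "(\<Sum>x\<in>A. (if x \<in> S then t else 0)) = (\<Sum>x\<in>S. t)"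
    using assms by (simp add: sum.If_cases Int_absorb1 Int_commute)
  then show ?thesis by (simp add: sum.distrib mult.commute)
qed

lemma bound:
  assumes sg: "simple_graph V E" and conn: "connected_graph V E" and rV: "r \<in> V"
    and ns: "\<not> root_solvable E D r" and d1: "1 \<le> diam V E"
  shows "sum D V \<le> (card V - 1) * (2 ^ (diam V E - 1) - 1) + ((card V - 1) div diam V E) * 2 ^ (diam V E - 1)"
proof -
  define d where "d = diam V E"
  have fin: "finite V" using sg by (simp add: simple_graph_def)
  have A: "D x < 2 ^ k" if "walk V E x r k" for x k
  proof (rule ccontr)
    assume "\<not> D x < 2 ^ k"
    then have "root_solvable E D r" using reach_solve[OF sg _ that, of D D] by simp
    then show False using ns by simp
  qed
  have Dlt: "D x < 2 ^ d" if "x \<in> V" for x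
  proof -
    have "D x < 2 ^ dist V E x r" using A dist_walk[OF conn that rV] by blast
    also have "\<dots> \<le> 2 ^ d" unfolding d_def by (rule power_increasing) (use dist_le_diam[OF sg that rV] in auto)
    finally show ?thesis .
  qed
  have Dr: "D r = 0" using A[OF walk_refl[OF rV]] by simp
  define S where "S = {x \<in> V. 2 ^ (d - 1) \<le> D x}"
  have noshort: "d \<le> k" if "v \<in> S" "walk V E v r k" for v k
  proof (rule ccontr)
    assume "\<not> d \<le> k"
    then have "(2::nat) ^ k \<le> 2 ^ (d - 1)" by (intro power_increasing) auto
    moreover have "2 ^ (d - 1) \<le> D v" using that(1) by (simp add: S_def)
    ultimately show False using A[OF that(2)] by linarith
  qed
  have "\<forall>v\<in>S. \<exists>p. p 0 = v \<and> p d = r \<and> (\<forall>i\<le>d. p i \<in> V) \<and> (\<forall>i<d. E (p i) (p (Suc i)))"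
  proof
    fix v assume v: "v \<in> S"
    then have vV: "v \<in> V" by (simp add: S_def)
    have "dist V E v r = d"
      using noshort[OF v dist_walk[OF conn vV rV]] dist_le_diam[OF sg vV rV] by (simp add: d_def)
    then have "walk V E v r d" using dist_walk[OF conn vV rV] by simp
    then show "\<exists>p. p 0 = v \<and> p d = r \<and> (\<forall>i\<le>d. p i \<in> V) \<and> (\<forall>i<d. E (p i) (p (Suc i)))"
      by (simp add: walk_def)
  qed
  then obtain P where P: "\<And>v. v \<in> S \<Longrightarrow> P v 0 = v \<and> P v d = r \<and> (\<forall>i\<le>d. P v i \<in> V) \<and> (\<forall>i<d. E (P v i) (P v (Suc i)))"
    using bchoice by metis
  have pre: "walk V E v (P v j) j" if "v \<in> S" "j \<le> d" for v j
    using walk_prefix[of "P v" v d V E j] P[OF that(1)] that(2) by blast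
  have suf: "walk V E (P v j) r (d - j)" if "v \<in> S" "j \<le> d" for v j
    using walk_suffix[of "P v" d r V E j] P[OF that(1)] that(2) by blast
  have inj_aux: "v = w \<and> j = j'" if vS: "v \<in> S" and wS: "w \<in> S" and jj: "j \<le> j'" "j' < d"
    and eq: "P v j = P w j'" for v w j j'
  proof -
    define u where "u = P v j"
    have wv: "walk V E v u j" using pre[OF vS] jj by (simp add: u_def)
    have ww: "walk V E w u j'" using pre[OF wS] jj by (simp add: u_def eq)
    have wu: "walk V E u r (d - j')" using suf[OF wS] jj by (simp add: u_def eq)
    show ?thesis
    proof (cases "v = w")
      case True
      show ?thesis
      proof (cases "j = j'")
        case False
        then have "j < j'" using jj by simp
        show ?thesis
        proof (cases "u = v")
          case True
          then show ?thesis using noshort[OF vS] wu \<open>j < j'\<close> jj by fastforce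
        next
          case False
          have "2 ^ (d - 1) \<le> D v" using vS by (simp add: S_def)
          moreover have "j + (d - j') < d" using \<open>j < j'\<close> jj by linarith
          ultimately show ?thesis using one_source[OF sg ns wv wu _ _ False, of d] by blast
        qed
      qed (use True in simp)
    next
      case False
      have Dv: "2 ^ (d - 1) \<le> D v" using vS by (simp add: S_def)
      have Dw: "2 ^ (d - 1) \<le> D w" using wS by (simp add: S_def)
      show ?thesis
      proof (cases "u = v \<or> u = w")
        case True
        show ?thesis
        proof (cases "j' = 0")
          case True
          then have "j = 0" using jj by simp
          then have "v = w" using P[OF vS] P[OF wS] eq True by simp
          then show ?thesis using False by simp
        next
          case j'0: False
          have "d \<le> d - j'" using True noshort[OF vS] noshort[OF wS] wu by blast
          then show ?thesis using j'0 jj by simp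
        qed
      next
        case uvw: False
        have "j + (d - j') \<le> d" "j' + (d - j') \<le> d" "1 \<le> d - j'" using jj by linarith+
        then show ?thesis using two_source[OF sg ns wv ww wu _ _ Dv Dw False] uvw by blast
      qed
    qed
  qed
  have inj: "inj_on (\<lambda>(v, j). P v j) (S \<times> {..<d})"
  proof (rule inj_onI, clarify)
    fix v j w j'
    assume h: "v \<in> S" "j < d" "w \<in> S" "j' < d" "P v j = P w j'"
    show "v = w \<and> j = j'"
    proof (cases "j \<le> j'")
      case True
      then show ?thesis using inj_aux h by blast
    next
      case False
      then show ?thesis using inj_aux[of w v j' j] h by simp
    qed
  qed
  have img: "(\<lambda>(v, j). P v j) ` (S \<times> {..<d}) \<subseteq> V - {r}"
  proof
    fix x assume "x \<in> (\<lambda>(v, j). P v j) ` (S \<times> {..<d})"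
    then obtain v j where h: "v \<in> S" "j < d" "x = P v j" by auto
    have "P v j \<in> V" using P[OF h(1)] h(2) by simp
    moreover have "P v j \<noteq> r"
    proof
      assume "P v j = r"
      then have "walk V E v r j" using pre[OF h(1), of j] h(2) by simp
      then show False using noshort[OF h(1)] h(2) by fastforce
    qed
    ultimately show "x \<in> V - {r}" using h by simp
  qed
  have "card (S \<times> {..<d}) \<le> card (V - {r})"
    by (rule card_inj_on_le[OF inj img]) (use fin in simp)
  then have cS: "card S * d \<le> card V - 1" using fin rV by (simp add: card_cartesian_product)
  have cS2: "card S \<le> (card V - 1) div d"
  proof -
    have "card S = card S * d div d" using d1 by (simp add: d_def)
    also have "\<dots> \<le> (card V - 1) div d" by (rule div_le_mono[OF cS])
    finally show ?thesis .
  qed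
  have SV: "S \<subseteq> V - {r}" using Dr by (auto simp: S_def)
  have pw: "D x \<le> (2 ^ (d - 1) - 1) + (if x \<in> S then 2 ^ (d - 1) else 0)" if "x \<in> V" for x
  proof -
    have "(2::nat) ^ d = 2 ^ (d - 1) + 2 ^ (d - 1)" using d1 unfolding d_def
      by (metis mult_2 power_Suc Suc_diff_1 less_le_trans zero_less_one)
    then show ?thesis using Dlt[OF that] that by (auto simp: S_def)
  qed
  have "sum D V = sum D (V - {r})" using Dr fin rV by (simp add: sum.remove)
  also have "\<dots> \<le> (\<Sum>x\<in>V - {r}. (2 ^ (d - 1) - 1) + (if x \<in> S then 2 ^ (d - 1) else 0))"
    by (rule sum_mono) (use pw in auto)
  also have "\<dots> = card (V - {r}) * (2 ^ (d - 1) - 1) + card S * 2 ^ (d - 1)"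
    using SV fin by (intro sum_aux) auto
  also have "\<dots> \<le> (card V - 1) * (2 ^ (d - 1) - 1) + ((card V - 1) div d) * 2 ^ (d - 1)"
    using cS2 fin rV by simp
  finally show ?thesis by (simp add: d_def)
qed

theorem theorem2:
  fixes V :: "'a set" and E :: "'a \<Rightarrow> 'a \<Rightarrow> bool"
  assumes "simple_graph V E" and "connected_graph V E" and "card V \<ge> 2"
  shows "int (pebbling_number V E)
    \<le> (int (card V) + int ((card V - 1) div diam V E) - 1) * 2 ^ (diam V E - 1) - int (card V) + 2"
proof -
  define n where "n = card V"
  define d where "d = diam V E"
  define q where "q = (card V - 1) div diam V E"
  define t where "t = (2::nat) ^ (d - 1)"
  have t1: "1 \<le> t" by (simp add: t_def)
  obtain a b where ab: "a \<in> V" "b \<in> V" "a \<noteq> b"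
  proof -
    have "1 < card V" using assms(3) by simp
    then have "\<not> card V \<le> Suc 0" by simp
    moreover have "finite V" using assms(1) by (simp add: simple_graph_def)
    ultimately show ?thesis using that card_le_Suc0_iff_eq by blast
  qed
  have d1: "1 \<le> d"
  proof -
    have "dist V E a b \<noteq> 0" using dist_walk[OF assms(2) ab(1,2)] ab(3) walk0 by metis
    then show ?thesis using dist_le_diam[OF assms(1) ab(1,2)] by (simp add: d_def)
  qed
  define N where "N = (n - 1) * (t - 1) + q * t + 1"
  have key: "\<forall>D. distribution V D \<and> sum D V = N \<longrightarrow> solvable V E D"
  proof (intro allI impI)
    fix D assume h: "distribution V D \<and> sum D V = N"
    show "solvable V E D" unfolding solvable_def
    proof
      fix r assume rV: "r \<in> V"
      show "root_solvable E D r"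
      proof (rule ccontr)
        assume "\<not> root_solvable E D r"
        from bound[OF assms(1,2) rV this] d1 have "sum D V \<le> N - 1"
          by (simp add: N_def n_def q_def t_def d_def)
        then show False using h by (simp add: N_def)
      qed
    qed
  qed
  have "pebbling_number V E \<le> N" unfolding pebbling_number_def by (rule Least_le) (rule key)
  moreover have "int N = (int n + int q - 1) * int t - int n + 2"
  proof -
    have n1: "1 \<le> n" using assms(3) by (simp add: n_def)
    obtain n' t' where "n = Suc n'" "t = Suc t'" using n1 t1 by (metis Suc_le_D One_nat_def)
    then show ?thesis unfolding N_def by (simp add: algebra_simps)
  qed
  ultimately show ?thesis by (simp add: n_def q_def t_def d_def)
qed

end
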